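(* Let $T$ be an extension of $\mathsf{Q}$ which represents a function $g$. Then $T$ represents every (partial) function $f$ that can be computed by an algorithm with oracle access to $g$.
   Context: $\mathsf{Q}$ is the first-order theory with equality in the language $\{0,S,+,\times\}$ axiomatized by: $\forall x\colon \neg\, Sx = 0$; $\forall x,y\colon Sx = Sy \rightarrow x = y$; $\forall x\colon x = 0 \lor \exists y\colon Sy = x$; $\forall x\colon x + 0 = x$; $\forall x,y\colon x + Sy = S(x+y)$; $\forall x\colon x \times 0 = 0$; $\forall x,y\colon x \times Sy = x + (x\times y)$. A theory is a set of sentences closed under logical consequence; an extension of $\mathsf{Q}$ is a theory containing it (possibly in an expanded language). Numerals: $\overline{n} = S\cdots S0$ ($n$ times $S$). A partial function $f\colon\mathbb{N}^k\to\mathbb{N}$ is represented in $T$ if there is a formula $\langle f\rangle(x_1,\dots,x_k,y)$ such that whenever $f(\mathbf{x}) = y$, $T \vdash \exists! y'\colon \langle f\rangle(\overline{\mathbf{x}}, y') \land \langle f\rangle(\overline{\mathbf{x}}, \overline{y})$, where $\exists! y\colon P(y) :\equiv \exists y\colon P(y) \land \forall z\colon P(z) \rightarrow z = y$. *)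

theory Defs
  imports Main
begin

section \<open>First-order syntax (de Bruijn indices), countable signature\<close>

text \<open>Function symbols are pairs (name, arity) with the arity given by the length of the
argument list; likewise relation symbols.  Names 0,1,2,3 of arities 0,1,2,2 are the
symbols 0, S, +, times of arithmetic.\<close>

datatype trm = Var nat | Fn nat "trm list"

datatype fm = Eq trm trm | Rel nat "trm list" | Bot | Imp fm fm | All fm

definition Neg :: "fm \<Rightarrow> fm" where "Neg p = Imp p Bot"
definition Or :: "fm \<Rightarrow> fm \<Rightarrow> fm" where "Or p q = Imp (Neg p) q"
definition And :: "fm \<Rightarrow> fm \<Rightarrow> fm" where "And p q = Neg (Imp p (Neg q))"
definition Ex :: "fm \<Rightarrow> fm" where "Ex p = Neg (All (Neg p))"

fun liftt :: "trm \<Rightarrow> trm" where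
  "liftt (Var i) = Var (Suc i)"
| "liftt (Fn f ts) = Fn f (map liftt ts)"

fun substt :: "(nat \<Rightarrow> trm) \<Rightarrow> trm \<Rightarrow> trm" where
  "substt \<sigma> (Var i) = \<sigma> i"
| "substt \<sigma> (Fn f ts) = Fn f (map (substt \<sigma>) ts)"

fun subst :: "(nat \<Rightarrow> trm) \<Rightarrow> fm \<Rightarrow> fm" where
  "subst \<sigma> (Eq s t) = Eq (substt \<sigma> s) (substt \<sigma> t)"
| "subst \<sigma> (Rel r ts) = Rel r (map (substt \<sigma>) ts)"
| "subst \<sigma> Bot = Bot"
| "subst \<sigma> (Imp p q) = Imp (subst \<sigma> p) (subst \<sigma> q)"
| "subst \<sigma> (All p) = All (subst (\<lambda>i. case i of 0 \<Rightarrow> Var 0 | Suc j \<Rightarrow> liftt (\<sigma> j)) p)"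

fun fvt :: "trm \<Rightarrow> nat set" where
  "fvt (Var i) = {i}"
| "fvt (Fn f ts) = (\<Union>t\<in>set ts. fvt t)"

fun fv :: "fm \<Rightarrow> nat set" where
  "fv (Eq s t) = fvt s \<union> fvt t"
| "fv (Rel r ts) = (\<Union>t\<in>set ts. fvt t)"
| "fv Bot = {}"
| "fv (Imp p q) = fv p \<union> fv q"
| "fv (All p) = {i. Suc i \<in> fv p}"

definition sentence :: "fm \<Rightarrow> bool" where "sentence p \<longleftrightarrow> fv p = {}"

text \<open>A language: a set of function symbols and a set of relation symbols, each given as
(name, arity).\<close>
type_synonym lang = "(nat \<times> nat) set \<times> (nat \<times> nat) set"

fun funs_t :: "trm \<Rightarrow> (nat \<times> nat) set" where
  "funs_t (Var i) = {}"
| "funs_t (Fn f ts) = insert (f, length ts) (\<Union>t\<in>set ts. funs_t t)"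

fun funs :: "fm \<Rightarrow> (nat \<times> nat) set" where
  "funs (Eq s t) = funs_t s \<union> funs_t t"
| "funs (Rel r ts) = (\<Union>t\<in>set ts. funs_t t)"
| "funs Bot = {}"
| "funs (Imp p q) = funs p \<union> funs q"
| "funs (All p) = funs p"

fun rels :: "fm \<Rightarrow> (nat \<times> nat) set" where
  "rels (Eq s t) = {}"
| "rels (Rel r ts) = {(r, length ts)}"
| "rels Bot = {}"
| "rels (Imp p q) = rels p \<union> rels q"
| "rels (All p) = rels p"

definition in_lang :: "lang \<Rightarrow> fm \<Rightarrow> bool" where
  "in_lang L p \<longleftrightarrow> funs p \<subseteq> fst L \<and> rels p \<subseteq> snd L"

text \<open>Since the signature is countable, by
Loewenheim--Skolem it suffices to consider carriers that are subsets of nat.\<close>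
record struc =
  dom :: "nat set"
  fint :: "nat \<Rightarrow> nat list \<Rightarrow> nat"
  rint :: "nat \<Rightarrow> nat list \<Rightarrow> bool"

definition is_struc :: "struc \<Rightarrow> bool" where
  "is_struc M \<longleftrightarrow> dom M \<noteq> {} \<and>
     (\<forall>f xs. set xs \<subseteq> dom M \<longrightarrow> fint M f xs \<in> dom M)"

fun evalt :: "struc \<Rightarrow> (nat \<Rightarrow> nat) \<Rightarrow> trm \<Rightarrow> nat" where
  "evalt M e (Var i) = e i"
| "evalt M e (Fn f ts) = fint M f (map (evalt M e) ts)"

definition cons_env :: "nat \<Rightarrow> (nat \<Rightarrow> nat) \<Rightarrow> nat \<Rightarrow> nat" where
  "cons_env d e i = (case i of 0 \<Rightarrow> d | Suc j \<Rightarrow> e j)"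

fun sat :: "struc \<Rightarrow> (nat \<Rightarrow> nat) \<Rightarrow> fm \<Rightarrow> bool" where
  "sat M e (Eq s t) = (evalt M e s = evalt M e t)"
| "sat M e (Rel r ts) = rint M r (map (evalt M e) ts)"
| "sat M e Bot = False"
| "sat M e (Imp p q) = (sat M e p \<longrightarrow> sat M e q)"
| "sat M e (All p) = (\<forall>d\<in>dom M. sat M (cons_env d e) p)"

definition valid_in :: "struc \<Rightarrow> fm \<Rightarrow> bool" where
  "valid_in M p \<longleftrightarrow> (\<forall>e. range e \<subseteq> dom M \<longrightarrow> sat M e p)"

definition conseq :: "fm set \<Rightarrow> fm \<Rightarrow> bool" where
  "conseq T p \<longleftrightarrow> (\<forall>M. is_struc M \<longrightarrow> (\<forall>q\<in>T. valid_in M q) \<longrightarrow> valid_in M p)"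

definition is_theory :: "lang \<Rightarrow> fm set \<Rightarrow> bool" where
  "is_theory L T \<longleftrightarrow> (\<forall>p\<in>T. sentence p \<and> in_lang L p) \<and>
     (\<forall>p. sentence p \<and> in_lang L p \<and> conseq T p \<longrightarrow> p \<in> T)"

definition Zero :: trm where "Zero = Fn 0 []"
definition Sc :: "trm \<Rightarrow> trm" where "Sc t = Fn 1 [t]"
definition Pl :: "trm \<Rightarrow> trm \<Rightarrow> trm" where "Pl s t = Fn 2 [s, t]"
definition Tm :: "trm \<Rightarrow> trm \<Rightarrow> trm" where "Tm s t = Fn 3 [s, t]"

definition Q_axioms :: "fm set" where
  "Q_axioms = {
     All (Neg (Eq (Sc (Var 0)) Zero)),
     All (All (Imp (Eq (Sc (Var 1)) (Sc (Var 0))) (Eq (Var 1) (Var 0)))),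
     All (Or (Eq (Var 0) Zero) (Ex (Eq (Sc (Var 0)) (Var 1)))),
     All (Eq (Pl (Var 0) Zero) (Var 0)),
     All (All (Eq (Pl (Var 1) (Sc (Var 0))) (Sc (Pl (Var 1) (Var 0))))),
     All (Eq (Tm (Var 0) Zero) Zero),
     All (All (Eq (Tm (Var 1) (Sc (Var 0))) (Pl (Var 1) (Tm (Var 1) (Var 0)))))}"

definition extends_Q :: "lang \<Rightarrow> fm set \<Rightarrow> bool" where
  "extends_Q L T \<longleftrightarrow> is_theory L T \<and> Q_axioms \<subseteq> T"

fun num :: "nat \<Rightarrow> trm" where
  "num 0 = Zero"
| "num (Suc n) = Sc (num n)"

text \<open>In a formula with free variables among 0..k, variable i (i<k) is x_(i+1) and variable k
is y.  inst xs t p substitutes the numerals of xs for the x's and the term t for y.\<close>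
definition inst :: "nat list \<Rightarrow> trm \<Rightarrow> fm \<Rightarrow> fm" where
  "inst xs t p = subst (\<lambda>i. if i < length xs then num (xs ! i)
                             else if i = length xs then t else Var 0) p"

text \<open>The sentence (\<exists>!y'. <f>(xs,y')) \<and> <f>(xs, y), with
 \<exists>!y. P(y) := \<exists>y. P(y) \<and> (\<forall>z. P(z) \<longrightarrow> z = y).\<close>
definition repr_sentence :: "fm \<Rightarrow> nat list \<Rightarrow> nat \<Rightarrow> fm" where
  "repr_sentence p xs y =
     And (Ex (And (inst xs (Var 0) p)
                  (All (Imp (inst xs (Var 0) p) (Eq (Var 0) (Var 1))))))
         (inst xs (num y) p)"

definition represents :: "lang \<Rightarrow> fm set \<Rightarrow> nat \<Rightarrow> (nat list \<Rightarrow> nat option) \<Rightarrow> bool" where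
  "represents L T k f \<longleftrightarrow> (\<exists>p. in_lang L p \<and> fv p \<subseteq> {..k} \<and>
     (\<forall>xs y. length xs = k \<and> f xs = Some y \<longrightarrow> repr_sentence p xs y \<in> T))"

text \<open>k-ary partial functions are functions nat list \<Rightarrow> nat option, only their values on lists
of length k matter.  orec m g k f: f is k-ary partial recursive relative to the m-ary partial
function g (Turing-reducibility in the form of relative partial recursiveness; Kleene: closure of zero, successor, projections and g under composition, primitive
recursion and unbounded minimisation).\<close>

fun prec :: "(nat list \<Rightarrow> nat option) \<Rightarrow> (nat list \<Rightarrow> nat option) \<Rightarrow> nat \<Rightarrow> nat list \<Rightarrow> nat option" where
  "prec b s 0 xs = b xs"
| "prec b s (Suc n) xs = (case prec b s n xs of None \<Rightarrow> None | Some r \<Rightarrow> s (n # r # xs))"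

definition minim :: "(nat list \<Rightarrow> nat option) \<Rightarrow> nat list \<Rightarrow> nat option" where
  "minim f xs = (if \<exists>y. f (y # xs) = Some 0 \<and> (\<forall>z<y. f (z # xs) \<noteq> None)
                 then Some (LEAST y. f (y # xs) = Some 0 \<and> (\<forall>z<y. f (z # xs) \<noteq> None))
                 else None)"

inductive orec :: "nat \<Rightarrow> (nat list \<Rightarrow> nat option) \<Rightarrow> nat \<Rightarrow> (nat list \<Rightarrow> nat option) \<Rightarrow> bool"
  for m :: nat and g :: "nat list \<Rightarrow> nat option" where
  zero: "orec m g k (\<lambda>xs. Some 0)"
| succ: "orec m g 1 (\<lambda>xs. Some (Suc (hd xs)))"
| proj: "i < k \<Longrightarrow> orec m g k (\<lambda>xs. Some (xs ! i))"
| query: "orec m g m g"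
| comp: "orec m g n h \<Longrightarrow> length hs = n \<Longrightarrow> list_all (orec m g k) hs \<Longrightarrow>
           orec m g k (\<lambda>xs. if list_all (\<lambda>h'. h' xs \<noteq> None) hs
                            then h (map (\<lambda>h'. the (h' xs)) hs) else None)"
| prim_rec: "orec m g k b \<Longrightarrow> orec m g (Suc (Suc k)) s \<Longrightarrow>
           orec m g (Suc k) (\<lambda>ys. prec b s (hd ys) (tl ys))"
| mu: "orec m g (Suc k) f \<Longrightarrow> orec m g k (minim f)"
| ext: "orec m g k f \<Longrightarrow> (\<forall>xs. length xs = k \<longrightarrow> f' xs = f xs) \<Longrightarrow> orec m g k f'"

end

theory Submission
  imports Defs "HOL-Number_Theory.Cong"
begin

lemma cons_env_simps[simp]: "cons_env d e 0 = d" "cons_env d e (Suc j) = e j"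
  by (simp_all add: cons_env_def)

lemma evalt_liftt[simp]: "evalt M (cons_env d e) (liftt t) = evalt M e t"
  by (induction t) (simp_all add: o_def cong: map_cong)

lemma evalt_substt: "evalt M e (substt \<sigma> t) = evalt M (\<lambda>i. evalt M e (\<sigma> i)) t"
  by (induction t) (simp_all add: o_def cong: map_cong)

lemma sat_subst: "sat M e (subst \<sigma> p) = sat M (\<lambda>i. evalt M e (\<sigma> i)) p"
proof (induction p arbitrary: e \<sigma>)
  case (All p)
  have "\<And>d. (\<lambda>i. evalt M (cons_env d e) ((case i of 0 \<Rightarrow> Var 0 | Suc j \<Rightarrow> liftt (\<sigma> j))))
        = cons_env d (\<lambda>i. evalt M e (\<sigma> i))"
    by (auto simp: cons_env_def fun_eq_iff split: nat.split)
  then show ?case using All by simp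
qed (auto simp: evalt_substt o_def)

lemma fvt_liftt[simp]: "fvt (liftt t) = Suc ` fvt t"
  by (induction t) auto

lemma fvt_substt: "fvt (substt \<sigma> t) = (\<Union>i\<in>fvt t. fvt (\<sigma> i))"
  by (induction t) auto

lemma fv_subst: "fv (subst \<sigma> p) \<subseteq> (\<Union>i\<in>fv p. fvt (\<sigma> i))"
proof (induction p arbitrary: \<sigma>)
  case (All p)
  show ?case
  proof
    fix x assume "x \<in> fv (subst \<sigma> (All p))"
    then have "Suc x \<in> fv (subst (\<lambda>i. case i of 0 \<Rightarrow> Var 0 | Suc j \<Rightarrow> liftt (\<sigma> j)) p)" by simp
    with All obtain i where i: "i \<in> fv p" "Suc x \<in> fvt (case i of 0 \<Rightarrow> Var 0 | Suc j \<Rightarrow> liftt (\<sigma> j))"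
      by blast
    then obtain j where "i = Suc j" by (cases i) auto
    with i show "x \<in> (\<Union>i\<in>fv (All p). fvt (\<sigma> i))" by auto
  qed
next
  case (Imp p q) then show ?case by (simp; blast)
qed (auto simp: fvt_substt)

lemma funs_t_liftt[simp]: "funs_t (liftt t) = funs_t t"
  by (induction t) auto

lemma funs_t_substt: "funs_t (substt \<sigma> t) \<subseteq> funs_t t \<union> (\<Union>i. funs_t (\<sigma> i))"
  by (induction t) auto

lemma funs_subst: "funs (subst \<sigma> p) \<subseteq> funs p \<union> (\<Union>i. funs_t (\<sigma> i))"
proof (induction p arbitrary: \<sigma>)
  case (All p)
  define \<sigma>' where "\<sigma>' = (\<lambda>i. case i of 0 \<Rightarrow> Var 0 | Suc j \<Rightarrow> liftt (\<sigma> j))"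
  have h: "(\<Union>i. funs_t (\<sigma>' i)) \<subseteq> (\<Union>i. funs_t (\<sigma> i))"
    by (auto simp: \<sigma>'_def split: nat.splits)
  have IH: "funs (subst \<sigma>' p) \<subseteq> funs p \<union> (\<Union>i. funs_t (\<sigma>' i))" by (rule All)
  have "funs (subst \<sigma> (All p)) = funs (subst \<sigma>' p)" by (simp add: \<sigma>'_def)
  with IH h show ?case by auto
next
  case (Eq s t) then show ?case using funs_t_substt[of \<sigma> s] funs_t_substt[of \<sigma> t] by auto
next
  case (Rel r ts) then show ?case using funs_t_substt[of \<sigma>] by fastforce
qed auto

lemma rels_subst[simp]: "rels (subst \<sigma> p) = rels p"
  by (induction p arbitrary: \<sigma>) auto

lemma evalt_cong: "(\<And>i. i \<in> fvt t \<Longrightarrow> e i = e' i) \<Longrightarrow> evalt M e t = evalt M e' t"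
proof (induction t)
  case (Fn f ts)
  then have "map (evalt M e) ts = map (evalt M e') ts" unfolding map_eq_conv by auto
  then show ?case by (simp only: evalt.simps)
qed auto

lemma sat_cong: "(\<And>i. i \<in> fv p \<Longrightarrow> e i = e' i) \<Longrightarrow> sat M e p = sat M e' p"
proof (induction p arbitrary: e e')
  case (Eq s t) then show ?case using evalt_cong[of s e e' M] evalt_cong[of t e e' M] by auto
next
  case (Rel r ts)
  then have "map (evalt M e) ts = map (evalt M e') ts" unfolding map_eq_conv by (auto intro!: evalt_cong)
  then show ?case by (simp only: sat.simps)
next
  case (Imp p q) then show ?case by (metis UnCI fv.simps(4) sat.simps(4))
next
  case (All p)
  have "\<And>d. sat M (cons_env d e) p = sat M (cons_env d e') p"
    by (rule All.IH) (use All.prems in \<open>auto simp: cons_env_def split: nat.split\<close>)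
  then show ?case by simp
qed auto

lemma sat_Neg[simp]: "sat M e (Neg p) = (\<not> sat M e p)" by (simp add: Neg_def)
lemma sat_And[simp]: "sat M e (And p q) = (sat M e p \<and> sat M e q)" by (simp add: And_def)
lemma sat_Or[simp]: "sat M e (Or p q) = (sat M e p \<or> sat M e q)" by (auto simp add: Or_def)
lemma sat_Ex[simp]: "sat M e (Ex p) = (\<exists>d\<in>dom M. sat M (cons_env d e) p)" by (simp add: Ex_def)

lemma fv_Neg[simp]: "fv (Neg p) = fv p" by (simp add: Neg_def)
lemma fv_And[simp]: "fv (And p q) = fv p \<union> fv q" by (simp add: And_def)
lemma fv_Or[simp]: "fv (Or p q) = fv p \<union> fv q" by (simp add: Or_def)
lemma fv_Ex[simp]: "fv (Ex p) = {i. Suc i \<in> fv p}" by (simp add: Ex_def)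
lemma funs_Neg[simp]: "funs (Neg p) = funs p" by (simp add: Neg_def)
lemma funs_And[simp]: "funs (And p q) = funs p \<union> funs q" by (simp add: And_def)
lemma funs_Ex[simp]: "funs (Ex p) = funs p" by (simp add: Ex_def)
lemma rels_Neg[simp]: "rels (Neg p) = rels p" by (simp add: Neg_def)
lemma rels_And[simp]: "rels (And p q) = rels p \<union> rels q" by (simp add: And_def)
lemma rels_Ex[simp]: "rels (Ex p) = rels p" by (simp add: Ex_def)

section \<open>Models of Q\<close>

definition qmodel :: "struc \<Rightarrow> bool" where
  "qmodel M \<longleftrightarrow> is_struc M \<and> (\<forall>q\<in>Q_axioms. valid_in M q)"

definition "zr M = fint M 0 []"
definition "sc M a = fint M 1 [a]"
definition "pl M a b = fint M 2 [a, b]"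
definition "tm M a b = fint M 3 [a, b]"

fun nv :: "struc \<Rightarrow> nat \<Rightarrow> nat" where
  "nv M 0 = zr M"
| "nv M (Suc n) = sc M (nv M n)"

lemma evalt_num[simp]: "evalt M e (num n) = nv M n"
  by (induction n) (simp_all add: Zero_def Sc_def zr_def sc_def)

lemma evalt_QQ[simp]: "evalt M e Zero = zr M" "evalt M e (Sc t) = sc M (evalt M e t)"
  "evalt M e (Pl s t) = pl M (evalt M e s) (evalt M e t)"
  "evalt M e (Tm s t) = tm M (evalt M e s) (evalt M e t)"
  by (simp_all add: Zero_def Sc_def Pl_def Tm_def zr_def sc_def pl_def tm_def)

context
  fixes M assumes qm: "qmodel M"
begin

lemma struc: "is_struc M" using qm by (simp add: qmodel_def)

lemma dom_ne: "dom M \<noteq> {}" using struc by (simp add: is_struc_def)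

lemma closed: "set xs \<subseteq> dom M \<Longrightarrow> fint M f xs \<in> dom M"
  using struc by (simp add: is_struc_def)

lemma zr_dom[simp]: "zr M \<in> dom M" unfolding zr_def by (rule closed) simp
lemma sc_dom[simp]: "a \<in> dom M \<Longrightarrow> sc M a \<in> dom M" unfolding sc_def by (rule closed) simp
lemma pl_dom[simp]: "a \<in> dom M \<Longrightarrow> b \<in> dom M \<Longrightarrow> pl M a b \<in> dom M" unfolding pl_def by (rule closed) simp
lemma tm_dom[simp]: "a \<in> dom M \<Longrightarrow> b \<in> dom M \<Longrightarrow> tm M a b \<in> dom M" unfolding tm_def by (rule closed) simp
lemma nv_dom[simp]: "nv M n \<in> dom M" by (induction n) simp_all

lemma ax_valid: "q \<in> Q_axioms \<Longrightarrow> a \<in> dom M \<Longrightarrow> sat M (\<lambda>_. a) q"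
  using qm by (auto simp: qmodel_def valid_in_def)

lemma Q1mem: "All (Neg (Eq (Sc (Var 0)) Zero)) \<in> Q_axioms"
  unfolding Q_axioms_def by blast
lemma Q1: "a \<in> dom M \<Longrightarrow> sc M a \<noteq> zr M"
  using ax_valid[OF Q1mem, of a] by simp

lemma Q2mem: "All (All (Imp (Eq (Sc (Var 1)) (Sc (Var 0))) (Eq (Var 1) (Var 0)))) \<in> Q_axioms"
  unfolding Q_axioms_def by blast
lemma Q2: "a \<in> dom M \<Longrightarrow> b \<in> dom M \<Longrightarrow> sc M a = sc M b \<Longrightarrow> a = b"
  using ax_valid[OF Q2mem, of a] by simp

lemma Q3mem: "All (Or (Eq (Var 0) Zero) (Ex (Eq (Sc (Var 0)) (Var 1)))) \<in> Q_axioms"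
  unfolding Q_axioms_def by blast
lemma Q3: "a \<in> dom M \<Longrightarrow> a = zr M \<or> (\<exists>b\<in>dom M. sc M b = a)"
  using ax_valid[OF Q3mem, of a] by simp

lemma Q4mem: "All (Eq (Pl (Var 0) Zero) (Var 0)) \<in> Q_axioms"
  unfolding Q_axioms_def by blast
lemma Q4: "a \<in> dom M \<Longrightarrow> pl M a (zr M) = a"
  using ax_valid[OF Q4mem, of a] by simp

lemma Q5mem: "All (All (Eq (Pl (Var 1) (Sc (Var 0))) (Sc (Pl (Var 1) (Var 0))))) \<in> Q_axioms"
  unfolding Q_axioms_def by blast
lemma Q5: "a \<in> dom M \<Longrightarrow> b \<in> dom M \<Longrightarrow> pl M a (sc M b) = sc M (pl M a b)"
  using ax_valid[OF Q5mem, of a] by simp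

lemma Q6mem: "All (Eq (Tm (Var 0) Zero) Zero) \<in> Q_axioms"
  unfolding Q_axioms_def by blast
lemma Q6: "a \<in> dom M \<Longrightarrow> tm M a (zr M) = zr M"
  using ax_valid[OF Q6mem, of a] by simp

lemma Q7mem: "All (All (Eq (Tm (Var 1) (Sc (Var 0))) (Pl (Var 1) (Tm (Var 1) (Var 0))))) \<in> Q_axioms"
  unfolding Q_axioms_def by blast
lemma Q7: "a \<in> dom M \<Longrightarrow> b \<in> dom M \<Longrightarrow> tm M a (sc M b) = pl M a (tm M a b)"
  using ax_valid[OF Q7mem, of a] by simp

lemma nv_inj: "nv M m = nv M n \<longleftrightarrow> m = n"
proof (induction m arbitrary: n)
  case 0 then show ?case by (cases n) (auto dest: sym simp: Q1[OF nv_dom])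
next
  case (Suc m) then show ?case by (cases n) (auto dest: Q2[OF nv_dom nv_dom] simp: Q1[OF nv_dom])
qed

lemma pl_nv: "a \<in> dom M \<Longrightarrow> pl M a (nv M n) = ((sc M) ^^ n) a"
  by (induction n) (simp_all add: Q4 Q5)

lemma pl_nv_nv[simp]: "pl M (nv M a) (nv M b) = nv M (a + b)"
proof -
  have "((sc M) ^^ b) (nv M a) = nv M (a + b)" by (induction b) simp_all
  then show ?thesis by (simp add: pl_nv)
qed

lemma tm_nv_nv[simp]: "tm M (nv M a) (nv M b) = nv M (a * b)"
  by (induction b) (simp_all add: Q6 Q7)

lemma le_nv: "x \<in> dom M \<Longrightarrow> w \<in> dom M \<Longrightarrow> pl M w x = nv M n \<Longrightarrow> \<exists>j\<le>n. x = nv M j"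
proof (induction n arbitrary: x)
  case 0
  from Q3[OF 0(1)] show ?case
  proof
    assume "\<exists>b\<in>dom M. sc M b = x"
    then obtain b where b: "b \<in> dom M" "x = sc M b" by auto
    then have "sc M (pl M w b) = zr M" using 0 Q5 by simp
    then show ?thesis using Q1[OF pl_dom[OF 0(2) b(1)]] by simp
  qed auto
next
  case (Suc n)
  from Q3[OF Suc(2)] show ?case
  proof
    assume "\<exists>b\<in>dom M. sc M b = x"
    then obtain b where b: "b \<in> dom M" "x = sc M b" by auto
    with Suc have "sc M (pl M w b) = sc M (nv M n)" by (simp add: Q5)
    then have "pl M w b = nv M n" using Q2[OF pl_dom[OF Suc(3) b(1)] nv_dom] by blast
    from Suc.IH[OF b(1) Suc(3) this] obtain j where "j \<le> n" "b = nv M j" by auto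
    with b show ?thesis by (intro exI[of _ "Suc j"]) auto
  qed (intro exI[of _ 0]; simp)
qed

lemma lt_nv: "x \<in> dom M \<Longrightarrow> w \<in> dom M \<Longrightarrow> pl M w (sc M x) = nv M n \<Longrightarrow> \<exists>j<n. x = nv M j"
proof -
  assume a: "x \<in> dom M" "w \<in> dom M" "pl M w (sc M x) = nv M n"
  from le_nv[OF sc_dom[OF a(1)] a(2,3)] obtain j where j: "j \<le> n" "sc M x = nv M j" by auto
  then obtain j' where "j = Suc j'" using Q1[OF a(1)] by (cases j) auto
  with j a show ?thesis using Q2[OF a(1) nv_dom] by (intro exI[of _ j']) auto
qed

lemma trich: "x \<in> dom M \<Longrightarrow> (\<exists>j<n. x = nv M j) \<or> (\<exists>w\<in>dom M. pl M w (nv M n) = x)"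
proof (induction n)
  case 0 then show ?case using Q4 by auto
next
  case (Suc n)
  from Suc.IH[OF Suc.prems] show ?case
  proof
    assume "\<exists>j<n. x = nv M j" then show ?thesis using less_SucI by blast
  next
    assume "\<exists>w\<in>dom M. pl M w (nv M n) = x"
    then obtain w where w: "w \<in> dom M" "pl M w (nv M n) = x" by auto
    from Q3[OF w(1)] show ?thesis
    proof
      assume "w = zr M"
      then have "x = nv M n" using w pl_nv_nv[of 0 n] by simp
      then show ?thesis by auto
    next
      assume "\<exists>b\<in>dom M. sc M b = w"
      then obtain b where b: "b \<in> dom M" "sc M b = w" by auto
      have "pl M b (nv M (Suc n)) = (sc M ^^ n) w"
        using pl_nv[OF b(1), of "Suc n"] b(2) by (simp only: funpow_Suc_right o_apply)
      then have "pl M b (nv M (Suc n)) = x" using w pl_nv[OF w(1)] by simp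
      with b show ?thesis by auto
    qed
  qed
qed

end

lemma beta_coprime:
  fixes b :: nat
  assumes "i < j" "j - i dvd b"
  shows "coprime (Suc (Suc i * b)) (Suc (Suc j * b))"
proof (rule coprimeI)
  fix d assume d1: "d dvd Suc (Suc i * b)" and d2: "d dvd Suc (Suc j * b)"
  have e1: "Suc j * Suc (Suc i * b) = Suc j + Suc j * Suc i * b" by (simp add: algebra_simps)
  have e2: "Suc i * Suc (Suc j * b) = Suc i + Suc j * Suc i * b" by (simp add: algebra_simps)
  have "d dvd Suc j * Suc (Suc i * b) - Suc i * Suc (Suc j * b)"
    using dvd_mult[OF d1, of "Suc j"] dvd_mult[OF d2, of "Suc i"] by (rule dvd_diff_nat)
  also have "Suc j * Suc (Suc i * b) - Suc i * Suc (Suc j * b) = j - i"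
    unfolding e1 e2 using assms by simp
  finally have "d dvd b" using assms(2) dvd_trans by blast
  then have "d dvd Suc i * b" by simp
  then have "d dvd Suc (Suc i * b) - Suc i * b" using d1 by (intro dvd_diff_nat)
  then show "is_unit d" by simp
qed

lemma beta_lemma:
  fixes v :: "nat \<Rightarrow> nat"
  shows "\<exists>a b. \<forall>i\<le>N. v i < Suc (Suc i * b) \<and> a mod Suc (Suc i * b) = v i"
proof -
  define B where "B = Suc (Max (insert N (v ` {..N})))"
  define b where "b = (fact B :: nat)"
  have vB: "v i < B" if "i \<le> N" for i
  proof -
    have "v i \<le> Max (v ` {..N})" using that by (intro Max_ge) auto
    then show ?thesis unfolding B_def by (simp add: le_imp_less_Suc)
  qed
  have NB: "N < B" unfolding B_def by (simp add: le_imp_less_Suc)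
  have Bb: "B \<le> b" unfolding b_def by (rule fact_ge_self)
  have lt: "v i < Suc (Suc i * b)" if "i \<le> N" for i
  proof -
    have "v i < b" using vB[OF that] Bb by simp
    also have "b \<le> Suc i * b" by simp
    finally show ?thesis by simp
  qed
  have cop: "\<forall>i\<in>{..N}. \<forall>j\<in>{..N}. i \<noteq> j \<longrightarrow> coprime (Suc (Suc i * b)) (Suc (Suc j * b))"
  proof (intro ballI impI)
    fix i j assume ij: "i \<in> {..N}" "j \<in> {..N}" "i \<noteq> j"
    have dv: "y - x dvd b" if "x < y" "y \<le> N" for x y
      unfolding b_def using that NB by (intro dvd_fact) auto
    show "coprime (Suc (Suc i * b)) (Suc (Suc j * b))"
    proof (cases "i < j")
      case True then show ?thesis using ij by (intro beta_coprime dv) auto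
    next
      case False then have "j < i" using ij by simp
      then show ?thesis using ij by (subst coprime_commute) (intro beta_coprime dv; auto)
    qed
  qed
  obtain a where a: "\<forall>i\<in>{..N}. [a = v i] (mod (\<lambda>i. Suc (Suc i * b)) i)"
    using chinese_remainder_nat[OF _ cop] by auto
  have "\<forall>i\<le>N. v i < Suc (Suc i * b) \<and> a mod Suc (Suc i * b) = v i"
  proof (intro allI impI conjI)
    fix i assume i: "i \<le> N"
    show "v i < Suc (Suc i * b)" using lt[OF i] .
    show "a mod Suc (Suc i * b) = v i" using a i lt[OF i] by (auto simp: cong_def)
  qed
  then show ?thesis by blast
qed


section \<open>Semantic representation\<close>

definition enve :: "nat list \<Rightarrow> nat \<Rightarrow> nat \<Rightarrow> nat \<Rightarrow> nat" where
  "enve as d c i = (if i < length as then as ! i else if i = length as then d else c)"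

definition dfn :: "struc \<Rightarrow> fm \<Rightarrow> nat \<Rightarrow> (nat list \<Rightarrow> nat option) \<Rightarrow> bool" where
  "dfn M p k f \<longleftrightarrow> (\<forall>xs y c d. length xs = k \<longrightarrow> f xs = Some y \<longrightarrow> c \<in> dom M \<longrightarrow> d \<in> dom M \<longrightarrow>
      (sat M (enve (map (nv M) xs) d c) p \<longleftrightarrow> d = nv M y))"

definition langQ :: "lang \<Rightarrow> bool" where
  "langQ L \<longleftrightarrow> {(0,0),(1,1),(2,2),(3,2)} \<subseteq> fst L"

definition Rep :: "lang \<Rightarrow> fm set \<Rightarrow> nat \<Rightarrow> (nat list \<Rightarrow> nat option) \<Rightarrow> bool" where
  "Rep L T k f \<longleftrightarrow> (\<exists>p. in_lang L p \<and> (\<forall>M. qmodel M \<longrightarrow> (\<forall>q\<in>T. valid_in M q) \<longrightarrow> dfn M p k f))"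

lemma sat_subst_env: "(\<And>i. evalt M e (\<sigma> i) = e' i) \<Longrightarrow> sat M e (subst \<sigma> p) = sat M e' p"
  by (simp add: sat_subst)

lemma in_lang_subst: "in_lang L p \<Longrightarrow> (\<And>i. funs_t (\<sigma> i) \<subseteq> fst L) \<Longrightarrow> in_lang L (subst \<sigma> p)"
proof -
  assume a: "in_lang L p" "\<And>i. funs_t (\<sigma> i) \<subseteq> fst L"
  have "funs (subst \<sigma> p) \<subseteq> fst L" using funs_subst[of \<sigma> p] a by (auto simp: in_lang_def)
  then show ?thesis using a(1) by (simp add: in_lang_def)
qed

lemma funs_t_num: "funs_t (num n) \<subseteq> {(0,0),(1,1)}"
  by (induction n) (auto simp: Zero_def Sc_def)

lemma sat_inst: "sat M e (inst xs t p) = sat M (enve (map (nv M) xs) (evalt M e t) (e 0)) p"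
  unfolding inst_def by (rule sat_subst_env) (simp add: enve_def)

lemma sat_repr: "sat M e (repr_sentence p xs y) \<longleftrightarrow>
   (\<exists>d\<in>dom M. sat M (enve (map (nv M) xs) d d) p \<and>
      (\<forall>d'\<in>dom M. sat M (enve (map (nv M) xs) d' d') p \<longrightarrow> d' = d)) \<and>
   sat M (enve (map (nv M) xs) (nv M y) (e 0)) p"
  unfolding repr_sentence_def by (simp add: sat_inst)

lemma sat_enve_cong: "fv p \<subseteq> {..length as} \<Longrightarrow> sat M (enve as d c) p = sat M (enve as d c') p"
  by (rule sat_cong) (auto simp: enve_def)

lemma rels_inst[simp]: "rels (inst xs t p) = rels p" by (simp add: inst_def)

lemma fvt_num_empty: "fvt (num n) = {}"
  by (induction n) (auto simp: Zero_def Sc_def)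

lemma fv_inst: "fv p \<subseteq> {..length xs} \<Longrightarrow> fv (inst xs t p) \<subseteq> fvt t"
proof
  fix x assume a: "fv p \<subseteq> {..length xs}" and x: "x \<in> fv (inst xs t p)"
  then obtain i where i: "i \<in> fv p" "x \<in> fvt ((\<lambda>i. if i < length xs then num (xs ! i)
                             else if i = length xs then t else Var 0) i)"
    unfolding inst_def using fv_subst by blast
  then show "x \<in> fvt t" using a by (auto simp: fvt_num_empty split: if_splits)
qed

lemma funs_inst: "funs_t t \<subseteq> {(0,0),(1,1)} \<Longrightarrow> funs (inst xs t p) \<subseteq> funs p \<union> {(0,0),(1,1)}"
proof -
  assume t: "funs_t t \<subseteq> {(0,0),(1,1)}"
  let ?s = "(\<lambda>i. if i < length xs then num (xs ! i) else if i = length xs then t else Var 0)"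
  have "funs_t (?s i) \<subseteq> {(0,0),(1,1)}" for i using t funs_t_num by auto
  then show ?thesis unfolding inst_def using funs_subst[of ?s p] by blast
qed


fun Exs :: "nat \<Rightarrow> fm \<Rightarrow> fm" where
  "Exs 0 p = p"
| "Exs (Suc n) p = Ex (Exs n p)"

definition pre :: "nat list \<Rightarrow> (nat \<Rightarrow> nat) \<Rightarrow> nat \<Rightarrow> nat" where
  "pre ds e i = (if i < length ds then ds ! i else e (i - length ds))"

lemma pre_cons_env: "pre ds (cons_env d e) = pre (ds @ [d]) e"
proof
  fix i
  consider "i < length ds" | "i = length ds" | "length ds < i" by linarith
  then show "pre ds (cons_env d e) i = pre (ds @ [d]) e i"
  proof cases
    case 3
    then have "i - length ds = Suc (i - Suc (length ds))" by simp
    then show ?thesis using 3 by (simp add: pre_def nth_append)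
  qed (auto simp: pre_def nth_append)
qed

lemma sat_Exs: "sat M e (Exs n p) \<longleftrightarrow> (\<exists>ds. length ds = n \<and> set ds \<subseteq> dom M \<and> sat M (pre ds e) p)"
proof (induction n arbitrary: e)
  case 0
  have "pre [] e = e" by (simp add: fun_eq_iff pre_def)
  then show ?case by simp
next
  case (Suc n)
  have "sat M e (Exs (Suc n) p) \<longleftrightarrow> (\<exists>d\<in>dom M. \<exists>ds. length ds = n \<and> set ds \<subseteq> dom M \<and> sat M (pre (ds @ [d]) e) p)"
    using Suc by (simp add: pre_cons_env)
  also have "\<dots> \<longleftrightarrow> (\<exists>ds. length ds = Suc n \<and> set ds \<subseteq> dom M \<and> sat M (pre ds e) p)"
  proof
    assume "\<exists>d\<in>dom M. \<exists>ds. length ds = n \<and> set ds \<subseteq> dom M \<and> sat M (pre (ds @ [d]) e) p"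
    then obtain d ds where "d \<in> dom M" "length ds = n" "set ds \<subseteq> dom M" "sat M (pre (ds @ [d]) e) p" by blast
    then show "\<exists>ds. length ds = Suc n \<and> set ds \<subseteq> dom M \<and> sat M (pre ds e) p"
      by (intro exI[of _ "ds @ [d]"]) auto
  next
    assume "\<exists>ds. length ds = Suc n \<and> set ds \<subseteq> dom M \<and> sat M (pre ds e) p"
    then obtain ds where ds: "length ds = Suc n" "set ds \<subseteq> dom M" "sat M (pre ds e) p" by blast
    then obtain ds' d where "ds = ds' @ [d]" by (metis length_Suc_conv_rev)
    with ds show "\<exists>d\<in>dom M. \<exists>ds. length ds = n \<and> set ds \<subseteq> dom M \<and> sat M (pre (ds @ [d]) e) p"
      by auto
  qed
  finally show ?case .
qed

lemma funs_Exs[simp]: "funs (Exs n p) = funs p" by (induction n) auto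
lemma rels_Exs[simp]: "rels (Exs n p) = rels p" by (induction n) auto

fun Conj :: "fm list \<Rightarrow> fm" where
  "Conj [] = Neg Bot"
| "Conj (p # ps) = And p (Conj ps)"

lemma in_lang_And: "in_lang L p \<Longrightarrow> in_lang L q \<Longrightarrow> in_lang L (And p q)"
  by (simp add: in_lang_def)
lemma in_lang_Exs: "in_lang L p \<Longrightarrow> in_lang L (Exs n p)"
  by (simp add: in_lang_def)
lemma in_lang_Conj: "\<forall>q\<in>set qs. in_lang L q \<Longrightarrow> in_lang L (Conj qs)"
  by (induction qs) (auto simp: in_lang_def)

lemma sat_Conj: "sat M e (Conj ps) \<longleftrightarrow> (\<forall>q\<in>set ps. sat M e q)"
  by (induction ps) auto
lemma funs_Conj: "funs (Conj ps) = (\<Union>q\<in>set ps. funs q)" by (induction ps) auto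
lemma rels_Conj: "rels (Conj ps) = (\<Union>q\<in>set ps. rels q)" by (induction ps) auto

definition compF :: "nat \<Rightarrow> nat \<Rightarrow> fm \<Rightarrow> fm list \<Rightarrow> fm" where
  "compF n k ph ps = Exs n (And
     (Conj (map (\<lambda>j. subst (\<lambda>i. if i < k then Var (n + i) else if i = k then Var j else Var (Suc (n + k))) (ps ! j)) [0..<n]))
     (subst (\<lambda>i. if i < n then Var i else if i = n then Var (n + k) else Var (Suc (n + k))) ph))"

lemma sat_compF:
  assumes "length X = k"
  shows "sat M (enve X d c) (compF n k ph ps) \<longleftrightarrow>
    (\<exists>ds. length ds = n \<and> set ds \<subseteq> dom M \<and> (\<forall>j<n. sat M (enve X (ds ! j) c) (ps ! j)) \<and> sat M (enve ds d c) ph)"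
proof -
  have e1: "sat M (pre ds (enve X d c)) (subst (\<lambda>i. if i < k then Var (n + i) else if i = k then Var j else Var (Suc (n + k))) (ps ! j))
     = sat M (enve X (ds ! j) c) (ps ! j)" if "length ds = n" "j < n" for ds j
    by (rule sat_subst_env) (use assms that in \<open>auto simp: pre_def enve_def\<close>)
  have e2: "sat M (pre ds (enve X d c)) (subst (\<lambda>i. if i < n then Var i else if i = n then Var (n + k) else Var (Suc (n + k))) ph)
     = sat M (enve ds d c) ph" if "length ds = n" for ds
    by (rule sat_subst_env) (use assms that in \<open>auto simp: pre_def enve_def\<close>)
  show ?thesis unfolding compF_def sat_Exs sat_And sat_Conj
    using e1 e2 by auto
qed


definition Rf :: "trm \<Rightarrow> trm \<Rightarrow> trm \<Rightarrow> trm \<Rightarrow> fm" where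
  "Rf a b i z = And (Ex (Eq (Pl (Var 0) (Sc (liftt z))) (Sc (Tm (Sc (liftt i)) (liftt b)))))
                  (Ex (And (Ex (Eq (Pl (Var 0) (Var 1)) (liftt (liftt a))))
                           (Eq (Pl (Tm (Var 0) (Sc (Tm (Sc (liftt i)) (liftt b)))) (liftt z)) (liftt a))))"

definition Rs :: "struc \<Rightarrow> nat \<Rightarrow> nat \<Rightarrow> nat \<Rightarrow> nat \<Rightarrow> bool" where
  "Rs M A B I Z \<longleftrightarrow> (\<exists>w\<in>dom M. pl M w (sc M Z) = sc M (tm M (sc M I) B)) \<and>
     (\<exists>q\<in>dom M. (\<exists>w\<in>dom M. pl M w q = A) \<and> pl M (tm M q (sc M (tm M (sc M I) B))) Z = A)"

lemma sat_Rf: "sat M e (Rf a b i z) = Rs M (evalt M e a) (evalt M e b) (evalt M e i) (evalt M e z)"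
  unfolding Rf_def Rs_def by simp

lemma funs_Rf: "funs (Rf a b i z) \<subseteq> {(0,0),(1,1),(2,2),(3,2)} \<union> funs_t a \<union> funs_t b \<union> funs_t i \<union> funs_t z"
  unfolding Rf_def by (auto simp: Zero_def Sc_def Pl_def Tm_def numeral_2_eq_2)

lemma rels_Rf[simp]: "rels (Rf a b i z) = {}"
  unfolding Rf_def by (simp add: Pl_def Sc_def Tm_def)

lemma Rs_std:
  assumes qm: "qmodel M" and Z: "Z \<in> dom M"
  shows "Rs M (nv M a) (nv M b) (nv M i) Z \<longleftrightarrow> Z = nv M (a mod Suc (Suc i * b))"
proof -
  define m where "m = Suc (Suc i * b)"
  have mm: "sc M (tm M (sc M (nv M i)) (nv M b)) = nv M m"
    using qm unfolding m_def by (simp del: nv.simps add: nv.simps(2)[symmetric])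
  have m0: "0 < m" by (simp add: m_def)
  show ?thesis unfolding Rs_def mm m_def[symmetric]
  proof
    assume "(\<exists>w\<in>dom M. pl M w (sc M Z) = nv M m) \<and>
       (\<exists>q\<in>dom M. (\<exists>w\<in>dom M. pl M w q = nv M a) \<and> pl M (tm M q (nv M m)) Z = nv M a)"
    then obtain w q w' where w: "w \<in> dom M" "pl M w (sc M Z) = nv M m" and
      q: "q \<in> dom M" "w' \<in> dom M" "pl M w' q = nv M a" "pl M (tm M q (nv M m)) Z = nv M a" by blast
    obtain j where j: "j < m" "Z = nv M j" using lt_nv[OF qm Z w] by blast
    obtain q' where q': "q = nv M q'" using le_nv[OF qm q(1,2,3)] by blast
    have "nv M (q' * m + j) = nv M a" using q(4) j q' qm by simp
    then have "q' * m + j = a" using nv_inj[OF qm] by blast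
    then have "a mod m = j" using j(1) by auto
    then show "Z = nv M (a mod m)" using j by simp
  next
    assume Zr: "Z = nv M (a mod m)"
    let ?r = "a mod m"
    have r: "?r < m" using m0 by simp
    have "pl M (nv M (m - Suc ?r)) (sc M Z) = nv M m"
      using qm Zr r by (simp del: nv.simps add: nv.simps(2)[symmetric])
    moreover have "pl M (nv M (a - a div m)) (nv M (a div m)) = nv M a" using qm by simp
    moreover have "pl M (tm M (nv M (a div m)) (nv M m)) Z = nv M a"
      using qm Zr by simp
    ultimately show "(\<exists>w\<in>dom M. pl M w (sc M Z) = nv M m) \<and>
       (\<exists>q\<in>dom M. (\<exists>w\<in>dom M. pl M w q = nv M a) \<and> pl M (tm M q (nv M m)) Z = nv M a)"
      using nv_dom[OF qm] by blast
  qed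
qed

definition recF :: "nat \<Rightarrow> fm \<Rightarrow> fm \<Rightarrow> fm" where
  "recF k pb ps = Ex (Ex (Conj [
     All (Imp (Rf (Var 2) (Var 1) Zero (Var 0))
       (subst (\<lambda>i. if i < k then Var (Suc (Suc (Suc (Suc i)))) else if i = k then Var 0 else Var (Suc (Suc (Suc (Suc (Suc k)))))) pb)),
     All (Imp (Ex (Eq (Pl (Var 0) (Sc (Var 1))) (Var 4)))
       (All (All (Imp (And (Rf (Var 4) (Var 3) (Var 2) (Var 1)) (Rf (Var 4) (Var 3) (Sc (Var 2)) (Var 0)))
          (subst (\<lambda>i. if i = 0 then Var 2 else if i = 1 then Var 1 else if i < Suc (Suc k) then Var (Suc (Suc (Suc (Suc i))))
                    else if i = Suc (Suc k) then Var 0 else Var (Suc (Suc (Suc (Suc (Suc (Suc (Suc k)))))))) ps))))),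
     All (Imp (Ex (Eq (Pl (Var 0) (Var 1)) (Var 4))) (Ex (Rf (Var 3) (Var 2) (Var 1) (Var 0)))),
     Rf (Var 1) (Var 0) (Var 2) (Var (Suc (Suc (Suc k))))]))"

lemma sat_recF:
  assumes "length X = k"
  shows "sat M (enve (N # X) d c) (recF k pb ps) \<longleftrightarrow> (\<exists>aa\<in>dom M. \<exists>bb\<in>dom M.
    (\<forall>z\<in>dom M. Rs M aa bb (zr M) z \<longrightarrow> sat M (enve X z c) pb) \<and>
    (\<forall>i\<in>dom M. (\<exists>w\<in>dom M. pl M w (sc M i) = N) \<longrightarrow>
       (\<forall>z\<in>dom M. \<forall>z'\<in>dom M. Rs M aa bb i z \<and> Rs M aa bb (sc M i) z' \<longrightarrow> sat M (enve (i # z # X) z' c) ps)) \<and>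
    (\<forall>i\<in>dom M. (\<exists>w\<in>dom M. pl M w i = N) \<longrightarrow> (\<exists>z\<in>dom M. Rs M aa bb i z)) \<and>
    Rs M aa bb N d)"
proof -
  let ?E = "enve (N # X) d c"
  have E0: "?E 0 = N" and E1: "?E (Suc k) = d" and E2: "?E (Suc (Suc k)) = c"
    using assms by (simp_all add: enve_def)
  have e1: "sat M (cons_env z (cons_env bb (cons_env aa ?E)))
     (subst (\<lambda>i. if i < k then Var (Suc (Suc (Suc (Suc i)))) else if i = k then Var 0 else Var (Suc (Suc (Suc (Suc (Suc k)))))) pb)
     = sat M (enve X z c) pb" for z bb aa
    by (rule sat_subst_env) (use assms in \<open>auto simp: enve_def\<close>)
  have e2: "sat M (cons_env z' (cons_env z (cons_env i (cons_env bb (cons_env aa ?E)))))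
     (subst (\<lambda>i. if i = 0 then Var 2 else if i = 1 then Var 1 else if i < Suc (Suc k) then Var (Suc (Suc (Suc (Suc i))))
                    else if i = Suc (Suc k) then Var 0 else Var (Suc (Suc (Suc (Suc (Suc (Suc (Suc k)))))))) ps)
     = sat M (enve (i # z # X) z' c) ps" for z' z i bb aa
  proof (rule sat_subst_env)
    fix j
    show "evalt M (cons_env z' (cons_env z (cons_env i (cons_env bb (cons_env aa ?E)))))
          (if j = 0 then Var 2 else if j = 1 then Var 1 else if j < Suc (Suc k) then Var (Suc (Suc (Suc (Suc j))))
                    else if j = Suc (Suc k) then Var 0 else Var (Suc (Suc (Suc (Suc (Suc (Suc (Suc k)))))))) =
          enve (i # z # X) z' c j"
    proof (cases j)
      case 0 then show ?thesis by (simp add: numeral_2_eq_2 enve_def)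
    next
      case (Suc j1) note j1 = this
      show ?thesis
      proof (cases j1)
        case 0 then show ?thesis using j1 by (simp add: enve_def)
      next
        case (Suc j2)
        then show ?thesis using j1 assms by (auto simp: enve_def)
      qed
    qed
  qed
  show ?thesis
    unfolding recF_def sat_Ex sat_Conj list.set ball_simps sat.simps sat_And e1 e2
    using E0 E1 E2 by (simp add: sat_Rf eval_nat_numeral)
qed

lemma prec_defined: "prec b s N xs = Some y \<Longrightarrow> j \<le> N \<Longrightarrow> prec b s j xs \<noteq> None"
proof (induction N arbitrary: y)
  case 0 then show ?case by simp
next
  case (Suc N)
  then obtain r where r: "prec b s N xs = Some r" by (cases "prec b s N xs") auto
  show ?case
  proof (cases "j = Suc N")
    case True with Suc show ?thesis by simp
  next
    case False with Suc r show ?thesis by auto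
  qed
qed

context
  fixes L :: lang and T :: "fm set"
  assumes ext_Q: "extends_Q L T"
begin

lemma thy: "is_theory L T" using ext_Q by (simp add: extends_Q_def)

lemma model_q: "is_struc M \<Longrightarrow> (\<forall>q\<in>T. valid_in M q) \<Longrightarrow> qmodel M"
  using ext_Q by (auto simp: extends_Q_def qmodel_def)

lemma langQ_L: "langQ L"
proof -
  have "Q_axioms \<subseteq> T" using ext_Q by (simp add: extends_Q_def)
  then have il: "\<And>q. q \<in> Q_axioms \<Longrightarrow> in_lang L q" using thy unfolding is_theory_def by blast
  have m1: "All (Neg (Eq (Sc (Var 0)) Zero)) \<in> Q_axioms" unfolding Q_axioms_def by blast
  have m4: "All (Eq (Pl (Var 0) Zero) (Var 0)) \<in> Q_axioms" unfolding Q_axioms_def by blast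
  have m6: "All (Eq (Tm (Var 0) Zero) Zero) \<in> Q_axioms" unfolding Q_axioms_def by blast
  have "funs (All (Neg (Eq (Sc (Var 0)) Zero))) = {(1,1),(0,0)}" by (auto simp: Sc_def Zero_def)
  moreover have "funs (All (Eq (Pl (Var 0) Zero) (Var 0))) = {(2,2),(0,0)}" by (auto simp: Pl_def Zero_def)
  moreover have "funs (All (Eq (Tm (Var 0) Zero) Zero)) = {(3,2),(0,0)}" by (auto simp: Tm_def Zero_def)
  ultimately show ?thesis using il[OF m1] il[OF m4] il[OF m6] unfolding langQ_def in_lang_def by auto
qed

lemma Rep_query: "represents L T m g \<Longrightarrow> Rep L T m g"
proof -
  assume "represents L T m g"
  then obtain p where p: "in_lang L p" "fv p \<subseteq> {..m}"
    "\<And>xs y. length xs = m \<Longrightarrow> g xs = Some y \<Longrightarrow> repr_sentence p xs y \<in> T"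
    by (auto simp: represents_def)
  have "dfn M p m g" if M: "qmodel M" "\<forall>q\<in>T. valid_in M q" for M
    unfolding dfn_def
  proof (intro allI impI)
    fix xs y c d assume a: "length xs = m" "g xs = Some y" "c \<in> dom M" "d \<in> dom M"
    let ?X = "map (nv M) xs"
    have fvX: "fv p \<subseteq> {..length ?X}" using p(2) a(1) by simp
    have "valid_in M (repr_sentence p xs y)" using M(2) p(3)[OF a(1,2)] by auto
    then have "sat M (\<lambda>_. c) (repr_sentence p xs y)" using a(3) by (auto simp: valid_in_def)
    then obtain d0 where d0: "d0 \<in> dom M" "sat M (enve ?X d0 d0) p"
      "\<And>d'. d' \<in> dom M \<Longrightarrow> sat M (enve ?X d' d') p \<Longrightarrow> d' = d0"
      and yy: "sat M (enve ?X (nv M y) c) p"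
      unfolding sat_repr by blast
    have cg: "\<And>u v v'. sat M (enve ?X u v) p = sat M (enve ?X u v') p"
      by (rule sat_enve_cong[OF fvX])
    have "sat M (enve ?X (nv M y) (nv M y)) p" using yy cg[of "nv M y" c "nv M y"] by simp
    then have "nv M y = d0" using d0(3)[OF nv_dom[OF M(1)]] by simp
    moreover have "sat M (enve ?X d c) p \<longleftrightarrow> d = d0"
    proof
      assume "sat M (enve ?X d c) p"
      then have "sat M (enve ?X d d) p" using cg[of d c d] by simp
      then show "d = d0" using d0(3) a(4) by simp
    next
      assume "d = d0"
      then show "sat M (enve ?X d c) p" using d0(2) cg[of d0 d0 c] by simp
    qed
    ultimately show "sat M (enve ?X d c) p \<longleftrightarrow> d = nv M y" by simp
  qed
  then show ?thesis using p(1) unfolding Rep_def by blast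
qed

lemma Rep_final: "Rep L T k f \<Longrightarrow> represents L T k f"
proof -
  assume "Rep L T k f"
  then obtain p where p: "in_lang L p" "\<And>M. qmodel M \<Longrightarrow> \<forall>q\<in>T. valid_in M q \<Longrightarrow> dfn M p k f"
    unfolding Rep_def by blast
  define p' where "p' = subst (\<lambda>i. if i \<le> k then Var i else Zero) p"
  have fv': "fv p' \<subseteq> {..k}"
  proof
    fix x assume "x \<in> fv p'"
    then obtain i where "x \<in> fvt ((\<lambda>i. if i \<le> k then Var i else Zero) i)"
      unfolding p'_def using fv_subst by blast
    then show "x \<in> {..k}" by (auto simp: Zero_def split: if_splits)
  qed
  have lQ: "{(0,0),(1,1),(2,2),(3,2)} \<subseteq> fst L" using langQ_L by (simp add: langQ_def)
  have il': "in_lang L p'" unfolding p'_def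
    by (rule in_lang_subst[OF p(1)]) (use lQ in \<open>auto simp: Zero_def\<close>)
  have def': "sat M (enve (map (nv M) xs) d c) p' \<longleftrightarrow> d = nv M y"
    if M: "qmodel M" "\<forall>q\<in>T. valid_in M q" and a: "length xs = k" "f xs = Some y" "d \<in> dom M" for M xs y d c
  proof -
    have "sat M (enve (map (nv M) xs) d c) p' = sat M (enve (map (nv M) xs) d (zr M)) p"
      unfolding p'_def by (rule sat_subst_env) (use a in \<open>auto simp: enve_def Zero_def zr_def\<close>)
    also have "\<dots> \<longleftrightarrow> d = nv M y" using p(2)[OF M] a zr_dom[OF M(1)] by (simp add: dfn_def)
    finally show ?thesis .
  qed
  have "repr_sentence p' xs y \<in> T" if a: "length xs = k" "f xs = Some y" for xs y
  proof -
    have "fv (inst xs (Var 0) p') \<subseteq> {0}" using fv_inst[of p' xs "Var 0"] fv' a by simp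
    moreover have "fv (inst xs (num y) p') = {}" using fv_inst[of p' xs "num y"] fv' a
      by (simp add: fvt_num_empty)
    ultimately have sent: "sentence (repr_sentence p' xs y)"
      unfolding sentence_def repr_sentence_def by auto
    have "funs (inst xs t p') \<subseteq> fst L" if "funs_t t \<subseteq> {(0,0),(1,1)}" for t
      using funs_inst[of t xs p'] that il' lQ by (auto simp: in_lang_def)
    then have inl: "in_lang L (repr_sentence p' xs y)"
      using il' funs_t_num[of y] by (auto simp: in_lang_def repr_sentence_def)
    have "conseq T (repr_sentence p' xs y)"
      unfolding conseq_def
    proof (intro allI impI)
      fix M assume M: "is_struc M" "\<forall>q\<in>T. valid_in M q"
      have qm: "qmodel M" using model_q[OF M] .
      show "valid_in M (repr_sentence p' xs y)"
        unfolding valid_in_def sat_repr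
      proof (intro allI impI conjI)
        fix e :: "nat \<Rightarrow> nat"
        have dd: "\<And>d c. d \<in> dom M \<Longrightarrow> sat M (enve (map (nv M) xs) d c) p' \<longleftrightarrow> d = nv M y"
          using def'[OF qm M(2) a] by blast
        have s1: "sat M (enve (map (nv M) xs) (nv M y) (nv M y)) p'" using dd[OF nv_dom[OF qm]] by simp
        have s2: "\<forall>d'\<in>dom M. sat M (enve (map (nv M) xs) d' d') p' \<longrightarrow> d' = nv M y" using dd by simp
        show "\<exists>d\<in>dom M. sat M (enve (map (nv M) xs) d d) p' \<and>
           (\<forall>d'\<in>dom M. sat M (enve (map (nv M) xs) d' d') p' \<longrightarrow> d' = d)"
          using s1 s2 nv_dom[OF qm, of y] by blast
        show "sat M (enve (map (nv M) xs) (nv M y) (e 0)) p'"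
          using dd nv_dom[OF qm, of y] by blast
      qed
    qed
    moreover have "\<forall>p. sentence p \<and> in_lang L p \<and> conseq T p \<longrightarrow> p \<in> T"
      using thy unfolding is_theory_def by blast
    ultimately show ?thesis using sent inl by blast
  qed
  then show ?thesis unfolding represents_def using il' fv' by (intro exI[of _ p']) simp
qed


lemma lQ: "{(0,0),(1,1),(2,2),(3,2)} \<subseteq> fst L" using langQ_L by (simp add: langQ_def)

lemma lQs: "(0,0) \<in> fst L" "(Suc 0, Suc 0) \<in> fst L" "(2, Suc (Suc 0)) \<in> fst L" "(3, Suc (Suc 0)) \<in> fst L"
  using lQ by (auto simp: numeral_2_eq_2)

lemma enve_len[simp]: "enve as d c (length as) = d" by (simp add: enve_def)
lemma enve_lt[simp]: "i < length as \<Longrightarrow> enve as d c i = as ! i" by (simp add: enve_def)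
lemma enve_len_map[simp]: "enve (map g xs) d c (length xs) = d" by (simp add: enve_def)
lemma enve_lt_map[simp]: "i < length xs \<Longrightarrow> enve (map g xs) d c i = g (xs ! i)" by (simp add: enve_def)
lemma enve_gt[simp]: "length as < i \<Longrightarrow> enve as d c i = c" by (simp add: enve_def)

lemma Rep_zero: "Rep L T k (\<lambda>xs. Some 0)"
  unfolding Rep_def
proof (intro exI conjI allI impI)
  show "in_lang L (Eq (Var k) Zero)" using lQ by (simp add: in_lang_def Zero_def)
  fix M assume "qmodel M"
  show "dfn M (Eq (Var k) Zero) k (\<lambda>xs. Some 0)"
    unfolding dfn_def by (simp add: enve_def)
qed

lemma Rep_succ: "Rep L T 1 (\<lambda>xs. Some (Suc (hd xs)))"
  unfolding Rep_def
proof (intro exI conjI allI impI)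
  show "in_lang L (Eq (Var 1) (Sc (Var 0)))" using lQ by (simp add: in_lang_def Sc_def)
  fix M assume "qmodel M"
  show "dfn M (Eq (Var 1) (Sc (Var 0))) 1 (\<lambda>xs. Some (Suc (hd xs)))"
    unfolding dfn_def
  proof (intro allI impI)
    fix xs y c d assume a: "length xs = 1" "Some (Suc (hd xs)) = Some y" "c \<in> dom M" "d \<in> dom M"
    then obtain x where "xs = [x]" by (cases xs) auto
    with a show "sat M (enve (map (nv M) xs) d c) (Eq (Var 1) (Sc (Var 0))) = (d = nv M y)"
      by (auto simp: enve_def)
  qed
qed

lemma Rep_proj: "i < k \<Longrightarrow> Rep L T k (\<lambda>xs. Some (xs ! i))"
  unfolding Rep_def
proof (intro exI conjI allI impI)
  show "in_lang L (Eq (Var k) (Var i))" by (simp add: in_lang_def)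
  fix M assume "qmodel M" and "i < k"
  then show "dfn M (Eq (Var k) (Var i)) k (\<lambda>xs. Some (xs ! i))"
    unfolding dfn_def by auto
qed

lemma Rep_ext: "Rep L T k f \<Longrightarrow> \<forall>xs. length xs = k \<longrightarrow> f' xs = f xs \<Longrightarrow> Rep L T k f'"
proof -
  assume "Rep L T k f" and fe: "\<forall>xs. length xs = k \<longrightarrow> f' xs = f xs"
  then obtain p where "in_lang L p" "\<forall>M. qmodel M \<longrightarrow> (\<forall>q\<in>T. valid_in M q) \<longrightarrow> dfn M p k f"
    unfolding Rep_def by blast
  moreover have "dfn M p k f \<Longrightarrow> dfn M p k f'" for M
    unfolding dfn_def using fe by simp
  ultimately show ?thesis unfolding Rep_def by blast
qed


lemma minim_facts:
  assumes "minim f xs = Some y"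
  shows "f (y # xs) = Some 0" "\<And>z. z < y \<Longrightarrow> \<exists>v. f (z # xs) = Some v \<and> v \<noteq> 0"
proof -
  define P where "P y \<longleftrightarrow> f (y # xs) = Some 0 \<and> (\<forall>z<y. f (z # xs) \<noteq> None)" for y
  have md: "minim f xs = (if \<exists>y. P y then Some (LEAST y. P y) else None)"
    unfolding minim_def P_def by simp
  have ex: "\<exists>y. P y"
  proof (rule ccontr)
    assume "\<not> (\<exists>y. P y)" then have "minim f xs = None" using md by simp
    with assms show False by simp
  qed
  then have yl: "y = (LEAST y. P y)" using md assms by simp
  have Py: "P y" using LeastI_ex[OF ex] yl by simp
  then show "f (y # xs) = Some 0" by (simp add: P_def)
  fix z assume z: "z < y"
  then obtain v where v: "f (z # xs) = Some v" using Py unfolding P_def by blast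
  have "v \<noteq> 0"
  proof
    assume "v = 0"
    moreover have "\<forall>z'<z. f (z' # xs) \<noteq> None" using Py z unfolding P_def by simp
    ultimately have "P z" using v unfolding P_def by simp
    then have "y \<le> z" unfolding yl by (rule Least_le)
    with z show False by simp
  qed
  with v show "\<exists>v. f (z # xs) = Some v \<and> v \<noteq> 0" by blast
qed

definition muF :: "nat \<Rightarrow> fm \<Rightarrow> fm" where
  "muF k p = And
     (subst (\<lambda>i. if i = 0 then Var k else if i \<le> k then Var (i - 1) else if i = Suc k then Zero else Var (Suc k)) p)
     (All (Imp (Ex (Eq (Pl (Var 0) (Sc (Var 1))) (Var (Suc (Suc k)))))
        (Ex (And (subst (\<lambda>i. if i = 0 then Var 1 else if i \<le> k then Var (Suc i) else if i = Suc k then Var 0 else Var (Suc (Suc (Suc k)))) p)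
                 (Neg (Eq (Var 0) Zero))))))"

lemma sat_muF:
  assumes "length X = k"
  shows "sat M (enve X d c) (muF k p) \<longleftrightarrow> sat M (enve (d # X) (zr M) c) p \<and>
    (\<forall>z\<in>dom M. (\<exists>w\<in>dom M. pl M w (sc M z) = d) \<longrightarrow> (\<exists>w\<in>dom M. sat M (enve (z # X) w c) p \<and> w \<noteq> zr M))"
proof -
  have e1: "sat M (enve X d c) (subst (\<lambda>i. if i = 0 then Var k else if i \<le> k then Var (i - 1) else if i = Suc k then Zero else Var (Suc k)) p)
     = sat M (enve (d # X) (zr M) c) p"
    by (rule sat_subst_env) (use assms in \<open>auto simp: enve_def nth_Cons'\<close>)
  have e2: "sat M (cons_env w (cons_env z (enve X d c))) (subst (\<lambda>i. if i = 0 then Var 1 else if i \<le> k then Var (Suc i) else if i = Suc k then Var 0 else Var (Suc (Suc (Suc k)))) p)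
     = sat M (enve (z # X) w c) p" for w z
    by (rule sat_subst_env) (use assms in \<open>auto simp: enve_def nth_Cons' cons_env_def split: nat.split\<close>)
  have e3: "enve X d c k = d"
    using assms by (simp add: enve_def)
  show ?thesis unfolding muF_def sat_And sat.simps sat_Ex sat_Neg e1 e2 by (simp add: e3)
qed

lemma funs_t_vars: "funs_t (if a then Var x else if b then Var y else if c then Zero else Var z) \<subseteq> {(0,0)}"
  by (auto simp: Zero_def)

lemma in_lang_muF: "in_lang L p \<Longrightarrow> in_lang L (muF k p)"
proof -
  assume p: "in_lang L p"
  have a: "in_lang L (subst (\<lambda>i. if i = 0 then Var k else if i \<le> k then Var (i - 1) else if i = Suc k then Zero else Var (Suc k)) p)"
    by (rule in_lang_subst[OF p]) (use lQ in \<open>auto simp: Zero_def\<close>)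
  have b: "in_lang L (subst (\<lambda>i. if i = 0 then Var 1 else if i \<le> k then Var (Suc i) else if i = Suc k then Var 0 else Var (Suc (Suc (Suc k)))) p)"
    by (rule in_lang_subst[OF p]) auto
  show ?thesis using a b lQs unfolding muF_def in_lang_def by (auto simp: Zero_def Sc_def Pl_def Ex_def Neg_def)
qed

lemma Rep_mu: "Rep L T (Suc k) f \<Longrightarrow> Rep L T k (minim f)"
proof -
  assume "Rep L T (Suc k) f"
  then obtain p where p: "in_lang L p" "\<And>M. qmodel M \<Longrightarrow> \<forall>q\<in>T. valid_in M q \<Longrightarrow> dfn M p (Suc k) f"
    unfolding Rep_def by blast
  have "dfn M (muF k p) k (minim f)" if M: "qmodel M" "\<forall>q\<in>T. valid_in M q" for M
    unfolding dfn_def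
  proof (intro allI impI)
    fix xs y c d assume a: "length xs = k" "minim f xs = Some y" "c \<in> dom M" "d \<in> dom M"
    let ?X = "map (nv M) xs"
    define S where "S a b = sat M (enve (a # ?X) b c) p" for a b
    have S: "S (nv M j) b \<longleftrightarrow> b = nv M v" if "f (j # xs) = Some v" "b \<in> dom M" for j v b
      using p(2)[OF M] that a unfolding dfn_def S_def by (metis length_Cons list.simps(9))
    have f0: "f (y # xs) = Some 0" and fz: "\<And>z. z < y \<Longrightarrow> \<exists>v. f (z # xs) = Some v \<and> v \<noteq> 0"
      using minim_facts[OF a(2)] by auto
    have sm: "sat M (enve ?X d c) (muF k p) \<longleftrightarrow> S d (zr M) \<and>
      (\<forall>z\<in>dom M. (\<exists>w\<in>dom M. pl M w (sc M z) = d) \<longrightarrow> (\<exists>w\<in>dom M. S z w \<and> w \<noteq> zr M))"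
      unfolding S_def by (rule sat_muF) (simp add: a)
    have zr0: "zr M = nv M 0" by simp
    show "sat M (enve ?X d c) (muF k p) \<longleftrightarrow> d = nv M y"
    proof
      assume d: "d = nv M y"
      have "S d (zr M)" using S[OF f0 zr_dom[OF M(1)]] d by simp
      moreover have "\<exists>w\<in>dom M. S z w \<and> w \<noteq> zr M" if z: "z \<in> dom M" "\<exists>w\<in>dom M. pl M w (sc M z) = d" for z
      proof -
        obtain j where j: "j < y" "z = nv M j" using lt_nv[OF M(1)] z d by blast
        obtain v where v: "f (j # xs) = Some v" "v \<noteq> 0" using fz[OF j(1)] by blast
        have "S z (nv M v)" using S[OF v(1) nv_dom[OF M(1)]] j by simp
        moreover have "nv M v \<noteq> zr M" using v(2) nv_inj[OF M(1), of v 0] by simp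
        ultimately show ?thesis using nv_dom[OF M(1)] by blast
      qed
      ultimately show "sat M (enve ?X d c) (muF k p)" using sm by blast
    next
      assume sat: "sat M (enve ?X d c) (muF k p)"
      then have Sd: "S d (zr M)" and cl: "\<And>z. z \<in> dom M \<Longrightarrow> (\<exists>w\<in>dom M. pl M w (sc M z) = d) \<Longrightarrow> \<exists>w\<in>dom M. S z w \<and> w \<noteq> zr M"
        using sm by blast+
      from trich[OF M(1) a(4), of y] show "d = nv M y"
      proof
        assume "\<exists>j<y. d = nv M j"
        then obtain j where j: "j < y" "d = nv M j" by blast
        obtain v where v: "f (j # xs) = Some v" "v \<noteq> 0" using fz[OF j(1)] by blast
        have "zr M = nv M v" using S[OF v(1) zr_dom[OF M(1)]] Sd j by simp
        then show ?thesis using v(2) nv_inj[OF M(1), of 0 v] by simp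
      next
        assume "\<exists>w\<in>dom M. pl M w (nv M y) = d"
        then obtain w where w: "w \<in> dom M" "pl M w (nv M y) = d" by blast
        from Q3[OF M(1) w(1)] show ?thesis
        proof
          assume "w = zr M"
          then show ?thesis using w pl_nv_nv[OF M(1), of 0 y] by simp
        next
          assume "\<exists>b\<in>dom M. sc M b = w"
          then obtain b where b: "b \<in> dom M" "sc M b = w" by blast
          have "pl M b (nv M (Suc y)) = (sc M ^^ y) w"
            using pl_nv[OF M(1) b(1), of "Suc y"] b(2) by (simp only: funpow_Suc_right o_apply)
          then have "pl M b (sc M (nv M y)) = d" using w pl_nv[OF M(1) w(1)] by simp
          then obtain w0 where w0: "w0 \<in> dom M" "S (nv M y) w0" "w0 \<noteq> zr M"
            using cl[OF nv_dom[OF M(1)]] b(1) by blast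
          then have "w0 = nv M 0" using S[OF f0 w0(1)] by simp
          with w0(3) show ?thesis by simp
        qed
      qed
    qed
  qed
  moreover have "in_lang L (muF k p)" by (rule in_lang_muF[OF p(1)])
  ultimately show ?thesis unfolding Rep_def by blast
qed

lemma in_lang_compF: "in_lang L ph \<Longrightarrow> (\<forall>q\<in>set ps. in_lang L q) \<Longrightarrow> length ps = n \<Longrightarrow> in_lang L (compF n k ph ps)"
proof -
  assume a: "in_lang L ph" "\<forall>q\<in>set ps. in_lang L q" "length ps = n"
  have b: "in_lang L (subst (\<lambda>i. if i < n then Var i else if i = n then Var (n + k) else Var (Suc (n + k))) ph)"
    by (rule in_lang_subst[OF a(1)]) auto
  have c: "in_lang L (subst (\<lambda>i. if i < k then Var (n + i) else if i = k then Var j else Var (Suc (n + k))) (ps ! j))"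
    if "j < n" for j
    by (rule in_lang_subst) (use a that in auto)
  show ?thesis unfolding compF_def
    by (intro in_lang_Exs in_lang_And in_lang_Conj b) (auto intro: c)
qed

lemma Rep_comp:
  assumes h: "Rep L T n h" and len: "length hs = n" and hs: "list_all (\<lambda>x. orec m g k x \<and> Rep L T k x) hs"
  shows "Rep L T k (\<lambda>xs. if list_all (\<lambda>h'. h' xs \<noteq> None) hs then h (map (\<lambda>h'. the (h' xs)) hs) else None)"
proof -
  define good where "good h' p \<longleftrightarrow> in_lang L p \<and> (\<forall>M. qmodel M \<longrightarrow> (\<forall>q\<in>T. valid_in M q) \<longrightarrow> dfn M p k h')" for h' p
  define ps where "ps = map (\<lambda>h'. SOME p. good h' p) hs"
  have lps: "length ps = n" using len by (simp add: ps_def)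
  have gps: "good (hs ! j) (ps ! j)" if "j < n" for j
  proof -
    have "Rep L T k (hs ! j)" using hs that len by (simp add: list_all_length)
    then have "\<exists>p. good (hs ! j) p" unfolding Rep_def good_def by blast
    then show ?thesis using that len unfolding ps_def by (simp add: someI_ex)
  qed
  obtain ph where ph: "in_lang L ph" "\<And>M. qmodel M \<Longrightarrow> \<forall>q\<in>T. valid_in M q \<Longrightarrow> dfn M ph n h"
    using h unfolding Rep_def by blast
  have il: "in_lang L (compF n k ph ps)"
  proof (rule in_lang_compF[OF ph(1) _ lps])
    show "\<forall>q\<in>set ps. in_lang L q" using gps lps unfolding good_def by (auto simp: in_set_conv_nth)
  qed
  have "dfn M (compF n k ph ps) k (\<lambda>xs. if list_all (\<lambda>h'. h' xs \<noteq> None) hs then h (map (\<lambda>h'. the (h' xs)) hs) else None)"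
    if M: "qmodel M" "\<forall>q\<in>T. valid_in M q" for M
    unfolding dfn_def
  proof (intro allI impI)
    fix xs y c d assume a: "length xs = k"
      "(if list_all (\<lambda>h'. h' xs \<noteq> None) hs then h (map (\<lambda>h'. the (h' xs)) hs) else None) = Some y"
      "c \<in> dom M" "d \<in> dom M"
    let ?X = "map (nv M) xs"
    define vs where "vs = map (\<lambda>h'. the (h' xs)) hs"
    have def: "list_all (\<lambda>h'. h' xs \<noteq> None) hs" and hy: "h vs = Some y"
      using a(2) by (auto simp: vs_def split: if_splits)
    have lvs: "length vs = n" using len by (simp add: vs_def)
    have hv: "(hs ! j) xs = Some (vs ! j)" if "j < n" for j
      using def that len by (auto simp: vs_def list_all_length)
    have dj: "sat M (enve ?X b c) (ps ! j) \<longleftrightarrow> b = nv M (vs ! j)" if "j < n" "b \<in> dom M" for j b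
      using gps[OF that(1)] M hv[OF that(1)] a(1,3) that(2) unfolding good_def dfn_def by blast
    have dh: "sat M (enve (map (nv M) vs) d c) ph \<longleftrightarrow> d = nv M y"
      using ph(2)[OF M] lvs hy a(3,4) unfolding dfn_def by blast
    have "sat M (enve ?X d c) (compF n k ph ps) \<longleftrightarrow>
      (\<exists>ds. length ds = n \<and> set ds \<subseteq> dom M \<and> (\<forall>j<n. sat M (enve ?X (ds ! j) c) (ps ! j)) \<and> sat M (enve ds d c) ph)"
      by (rule sat_compF) (simp add: a(1))
    also have "\<dots> \<longleftrightarrow> sat M (enve (map (nv M) vs) d c) ph"
    proof
      assume "\<exists>ds. length ds = n \<and> set ds \<subseteq> dom M \<and> (\<forall>j<n. sat M (enve ?X (ds ! j) c) (ps ! j)) \<and> sat M (enve ds d c) ph"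
      then obtain ds where ds: "length ds = n" "set ds \<subseteq> dom M" "\<forall>j<n. sat M (enve ?X (ds ! j) c) (ps ! j)" "sat M (enve ds d c) ph"
        by blast
      have "ds = map (nv M) vs"
      proof (rule nth_equalityI)
        show "length ds = length (map (nv M) vs)" using ds(1) lvs by simp
        fix j assume "j < length ds"
        then show "ds ! j = map (nv M) vs ! j" using dj[of j "ds ! j"] ds lvs by (auto simp: subset_iff)
      qed
      with ds(4) show "sat M (enve (map (nv M) vs) d c) ph" by simp
    next
      assume s: "sat M (enve (map (nv M) vs) d c) ph"
      show "\<exists>ds. length ds = n \<and> set ds \<subseteq> dom M \<and> (\<forall>j<n. sat M (enve ?X (ds ! j) c) (ps ! j)) \<and> sat M (enve ds d c) ph"
        using s lvs dj nv_dom[OF M(1)] by (intro exI[of _ "map (nv M) vs"]) auto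
    qed
    also have "\<dots> \<longleftrightarrow> d = nv M y" by (rule dh)
    finally show "sat M (enve ?X d c) (compF n k ph ps) \<longleftrightarrow> d = nv M y" .
  qed
  with il show ?thesis unfolding Rep_def by blast
qed

lemma in_lang_Rf_vars: "(\<And>t. t \<in> {a, b, i, z} \<Longrightarrow> funs_t t \<subseteq> fst L) \<Longrightarrow> in_lang L (Rf a b i z)"
proof -
  assume h: "\<And>t. t \<in> {a, b, i, z} \<Longrightarrow> funs_t t \<subseteq> fst L"
  have "funs_t a \<union> funs_t b \<union> funs_t i \<union> funs_t z \<subseteq> fst L" using h by blast
  then have "funs (Rf a b i z) \<subseteq> fst L" using funs_Rf[of a b i z] lQ by blast
  then show ?thesis unfolding in_lang_def by simp
qed

lemma dfnD: "dfn M p k f \<Longrightarrow> length xs = k \<Longrightarrow> f xs = Some y \<Longrightarrow> c \<in> dom M \<Longrightarrow> d \<in> dom M \<Longrightarrow>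
   sat M (enve (map (nv M) xs) d c) p \<longleftrightarrow> d = nv M y"
  unfolding dfn_def by blast

lemma in_lang_recF: "in_lang L pb \<Longrightarrow> in_lang L ps \<Longrightarrow> in_lang L (recF k pb ps)"
proof -
  assume a: "in_lang L pb" "in_lang L ps"
  have Z: "funs_t Zero \<subseteq> fst L" "\<And>t. funs_t t \<subseteq> fst L \<Longrightarrow> funs_t (Sc t) \<subseteq> fst L"
    using lQs by (auto simp: Zero_def Sc_def)
  have V: "funs_t (Var j) \<subseteq> fst L" for j by simp
  have b1: "in_lang L (subst (\<lambda>i. if i < k then Var (Suc (Suc (Suc (Suc i)))) else if i = k then Var 0 else Var (Suc (Suc (Suc (Suc (Suc k)))))) pb)"
    by (rule in_lang_subst[OF a(1)]) auto
  have b2: "in_lang L (subst (\<lambda>i. if i = 0 then Var 2 else if i = 1 then Var 1 else if i < Suc (Suc k) then Var (Suc (Suc (Suc (Suc i))))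
                    else if i = Suc (Suc k) then Var 0 else Var (Suc (Suc (Suc (Suc (Suc (Suc (Suc k)))))))) ps)"
    by (rule in_lang_subst[OF a(2)]) auto
  have r: "in_lang L (Rf (Var 2) (Var 1) Zero (Var 0))" "in_lang L (Rf (Var 4) (Var 3) (Var 2) (Var 1))"
    "in_lang L (Rf (Var 4) (Var 3) (Sc (Var 2)) (Var 0))" "in_lang L (Rf (Var 3) (Var 2) (Var 1) (Var 0))"
    "in_lang L (Rf (Var 1) (Var 0) (Var 2) (Var (Suc (Suc (Suc k)))))"
    by (intro in_lang_Rf_vars; auto simp: Zero_def Sc_def lQs)+
  have e1: "in_lang L (Ex (Eq (Pl (Var 0) (Sc (Var 1))) (Var 4)))" "in_lang L (Ex (Eq (Pl (Var 0) (Var 1)) (Var 4)))"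
    using lQs by (auto simp: in_lang_def Pl_def Sc_def)
  show ?thesis unfolding recF_def using b1 b2 r e1
    by (auto simp: in_lang_def Ex_def Neg_def And_def)
qed

lemma Rep_prim:
  assumes hb: "Rep L T k b" and hs: "Rep L T (Suc (Suc k)) s"
  shows "Rep L T (Suc k) (\<lambda>ys. prec b s (hd ys) (tl ys))"
proof -
  obtain pb where pb: "in_lang L pb" "\<And>M. qmodel M \<Longrightarrow> \<forall>q\<in>T. valid_in M q \<Longrightarrow> dfn M pb k b"
    using hb unfolding Rep_def by blast
  obtain ps where ps: "in_lang L ps" "\<And>M. qmodel M \<Longrightarrow> \<forall>q\<in>T. valid_in M q \<Longrightarrow> dfn M ps (Suc (Suc k)) s"
    using hs unfolding Rep_def by blast
  have "dfn M (recF k pb ps) (Suc k) (\<lambda>ys. prec b s (hd ys) (tl ys))"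
    if M: "qmodel M" "\<forall>q\<in>T. valid_in M q" for M
    unfolding dfn_def
  proof (intro allI impI)
    fix ys y c d assume a: "length ys = Suc k" "prec b s (hd ys) (tl ys) = Some y" "c \<in> dom M" "d \<in> dom M"
    obtain N xs where ys: "ys = N # xs" using a(1) by (cases ys) auto
    have lx: "length xs = k" using a(1) ys by simp
    have py: "prec b s N xs = Some y" using a(2) ys by simp
    let ?X = "map (nv M) xs"
    define v where "v j = the (prec b s j xs)" for j
    have pv: "prec b s j xs = Some (v j)" if "j \<le> N" for j
      using prec_defined[OF py that] by (auto simp: v_def)
    have b0: "b xs = Some (v 0)" using pv[of 0] by simp
    have sj: "s (j # v j # xs) = Some (v (Suc j))" if "j < N" for j
      using pv[of j] pv[of "Suc j"] that by simp
    have yN: "y = v N" using pv[of N] py by simp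
    have Db: "sat M (enve ?X z c) pb \<longleftrightarrow> z = nv M (v 0)" if "z \<in> dom M" for z
      using pb(2)[OF M] b0 lx a(3) that unfolding dfn_def by blast
    have Ds: "sat M (enve (nv M j # nv M (v j) # ?X) z c) ps \<longleftrightarrow> z = nv M (v (Suc j))" if "j < N" "z \<in> dom M" for j z
    proof -
      have "sat M (enve (map (nv M) (j # v j # xs)) z c) ps \<longleftrightarrow> z = nv M (v (Suc j))"
        using dfnD[OF ps(2)[OF M], of "j # v j # xs"] sj[OF that(1)] lx a(3) that(2) by simp
      then show ?thesis by simp
    qed
    have sr: "sat M (enve (nv M N # ?X) d c) (recF k pb ps) \<longleftrightarrow> (\<exists>aa\<in>dom M. \<exists>bb\<in>dom M.
      (\<forall>z\<in>dom M. Rs M aa bb (zr M) z \<longrightarrow> sat M (enve ?X z c) pb) \<and>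
      (\<forall>i\<in>dom M. (\<exists>w\<in>dom M. pl M w (sc M i) = nv M N) \<longrightarrow>
         (\<forall>z\<in>dom M. \<forall>z'\<in>dom M. Rs M aa bb i z \<and> Rs M aa bb (sc M i) z' \<longrightarrow> sat M (enve (i # z # ?X) z' c) ps)) \<and>
      (\<forall>i\<in>dom M. (\<exists>w\<in>dom M. pl M w i = nv M N) \<longrightarrow> (\<exists>z\<in>dom M. Rs M aa bb i z)) \<and>
      Rs M aa bb (nv M N) d)"
      by (rule sat_recF) (simp add: lx)
    have lt_w: "\<exists>w\<in>dom M. pl M w (sc M (nv M j)) = nv M N" if "j < N" for j
    proof -
      have "pl M (nv M (N - Suc j)) (nv M (Suc j)) = nv M N" using pl_nv_nv[OF M(1), of "N - Suc j" "Suc j"] that by simp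
      then have "pl M (nv M (N - Suc j)) (sc M (nv M j)) = nv M N" by (simp only: nv.simps)
      then show ?thesis using nv_dom[OF M(1)] by blast
    qed
    have le_w: "\<exists>w\<in>dom M. pl M w (nv M j) = nv M N" if "j \<le> N" for j
    proof -
      have "pl M (nv M (N - j)) (nv M j) = nv M N" using M(1) that by simp
      then show ?thesis using nv_dom[OF M(1)] by blast
    qed
    have "sat M (enve (nv M N # ?X) d c) (recF k pb ps) \<longleftrightarrow> d = nv M y"
    proof
      assume "sat M (enve (nv M N # ?X) d c) (recF k pb ps)"
      then obtain aa bb where ab: "aa \<in> dom M" "bb \<in> dom M"
        and C1: "\<And>z. z \<in> dom M \<Longrightarrow> Rs M aa bb (zr M) z \<Longrightarrow> sat M (enve ?X z c) pb"
        and C2: "\<And>i z z'. i \<in> dom M \<Longrightarrow> (\<exists>w\<in>dom M. pl M w (sc M i) = nv M N) \<Longrightarrow> z \<in> dom M \<Longrightarrow> z' \<in> dom M \<Longrightarrow>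
                 Rs M aa bb i z \<Longrightarrow> Rs M aa bb (sc M i) z' \<Longrightarrow> sat M (enve (i # z # ?X) z' c) ps"
        and C3: "\<And>i. i \<in> dom M \<Longrightarrow> (\<exists>w\<in>dom M. pl M w i = nv M N) \<Longrightarrow> \<exists>z\<in>dom M. Rs M aa bb i z"
        and C4: "Rs M aa bb (nv M N) d"
        unfolding sr by blast
      have claim: "\<forall>z\<in>dom M. Rs M aa bb (nv M j) z \<longrightarrow> z = nv M (v j)" if "j \<le> N" for j
        using that
      proof (induction j)
        case 0
        show ?case
        proof (intro ballI impI)
          fix z assume "z \<in> dom M" "Rs M aa bb (nv M 0) z"
          then show "z = nv M (v 0)" using C1 Db by simp
        qed
      next
        case (Suc j)
        then have jN: "j < N" by simp
        obtain z0 where z0: "z0 \<in> dom M" "Rs M aa bb (nv M j) z0" using C3[OF nv_dom[OF M(1)] le_w[of j]] jN by auto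
        have z0v: "z0 = nv M (v j)" using Suc.IH jN z0 by simp
        show ?case
        proof (intro ballI impI)
          fix z' assume z': "z' \<in> dom M" "Rs M aa bb (nv M (Suc j)) z'"
          have "sat M (enve (nv M j # nv M (v j) # ?X) z' c) ps"
            using C2[OF nv_dom[OF M(1)] lt_w[OF jN] z0(1) z'(1) z0(2)] z' z0v by simp
          then show "z' = nv M (v (Suc j))" using Ds[OF jN z'(1)] by simp
        qed
      qed
      show "d = nv M y" using claim[of N] C4 a(4) yN by simp
    next
      assume d: "d = nv M y"
      obtain A B where AB: "\<forall>j\<le>N. v j < Suc (Suc j * B) \<and> A mod Suc (Suc j * B) = v j"
        using beta_lemma by blast
      have R: "Rs M (nv M A) (nv M B) (nv M j) z \<longleftrightarrow> z = nv M (v j)" if "j \<le> N" "z \<in> dom M" for j z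
        using Rs_std[OF M(1) that(2)] AB that(1) by simp
      have c1: "\<forall>z\<in>dom M. Rs M (nv M A) (nv M B) (zr M) z \<longrightarrow> sat M (enve ?X z c) pb"
        using R[of 0] Db by simp
      have c2: "\<forall>i\<in>dom M. (\<exists>w\<in>dom M. pl M w (sc M i) = nv M N) \<longrightarrow>
         (\<forall>z\<in>dom M. \<forall>z'\<in>dom M. Rs M (nv M A) (nv M B) i z \<and> Rs M (nv M A) (nv M B) (sc M i) z' \<longrightarrow> sat M (enve (i # z # ?X) z' c) ps)"
      proof (intro ballI impI allI)
        fix i z z' assume i: "i \<in> dom M" "\<exists>w\<in>dom M. pl M w (sc M i) = nv M N" and zz: "z \<in> dom M" "z' \<in> dom M"
          and r: "Rs M (nv M A) (nv M B) i z \<and> Rs M (nv M A) (nv M B) (sc M i) z'"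
        obtain j where j: "j < N" "i = nv M j" using lt_nv[OF M(1) i(1)] i(2) by blast
        have "z = nv M (v j)" using R[of j z] j r zz by simp
        moreover have "z' = nv M (v (Suc j))" using R[of "Suc j" z'] j r zz by simp
        ultimately show "sat M (enve (i # z # ?X) z' c) ps" using Ds[OF j(1)] j nv_dom[OF M(1)] by simp
      qed
      have c3: "\<forall>i\<in>dom M. (\<exists>w\<in>dom M. pl M w i = nv M N) \<longrightarrow> (\<exists>z\<in>dom M. Rs M (nv M A) (nv M B) i z)"
      proof (intro ballI impI)
        fix i assume i: "i \<in> dom M" "\<exists>w\<in>dom M. pl M w i = nv M N"
        obtain j where j: "j \<le> N" "i = nv M j" using le_nv[OF M(1) i(1)] i(2) by blast
        show "\<exists>z\<in>dom M. Rs M (nv M A) (nv M B) i z" using R[OF j(1)] j(2) nv_dom[OF M(1)] by blast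
      qed
      have c4: "Rs M (nv M A) (nv M B) (nv M N) d" using R[of N d] d yN a(4) by simp
      show "sat M (enve (nv M N # ?X) d c) (recF k pb ps)"
        unfolding sr using c1 c2 c3 c4 nv_dom[OF M(1)] by blast
    qed
    then show "sat M (enve (map (nv M) ys) d c) (recF k pb ps) \<longleftrightarrow> d = nv M y" using ys by simp
  qed
  moreover have "in_lang L (recF k pb ps)" by (rule in_lang_recF[OF pb(1) ps(1)])
  ultimately show ?thesis unfolding Rep_def by blast
qed

lemma Rep_all: "represents L T m g \<Longrightarrow> orec m g k f \<Longrightarrow> Rep L T k f"
proof -
  assume r: "represents L T m g" and o: "orec m g k f"
  from o show ?thesis
  proof (induction rule: orec.induct)
    case (zero k) then show ?case by (rule Rep_zero)
  next
    case succ then show ?case by (rule Rep_succ)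
  next
    case (proj i k) then show ?case by (rule Rep_proj)
  next
    case query then show ?case by (rule Rep_query[OF r])
  next
    case (comp n h hs k) show ?case by (rule Rep_comp[OF comp.IH(1) comp.hyps(2) comp.IH(2)])
  next
    case (prim_rec k b s) show ?case by (rule Rep_prim[OF prim_rec.IH(1) prim_rec.IH(2)])
  next
    case (mu k f) show ?case by (rule Rep_mu[OF mu.IH])
  next
    case (ext k f f') show ?case by (rule Rep_ext[OF ext.IH ext.hyps(2)])
  qed
qed

end

theorem mainTheorem19:
  fixes L :: lang and T :: "fm set"
    and m :: nat and g :: "nat list \<Rightarrow> nat option"
    and k :: nat and f :: "nat list \<Rightarrow> nat option"
  assumes "extends_Q L T"
    and "represents L T m g"
    and "orec m g k f"
  shows "represents L T k f"
  using Rep_final[OF assms(1) Rep_all[OF assms(1) assms(2) assms(3)]] .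

end
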